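(* Let $I$ be a compact interval, $n\in\mathbb{N}$ and $A_0,A_1,\dots,A_n$ non-empty compact intervals of $\mathbb{R}$. Let $p:I\to\mathcal{K}(\mathbb{R})$ be the polynomial $p(x)=A_0\oplus A_1x\oplus A_2x^2\oplus\cdots\oplus A_nx^n$. Then $\dim_H\mathcal{G}_*(p)=1$.
   Context: $\mathcal{K}(\mathbb{R})$: non-empty compact subsets of $\mathbb{R}$ with Hausdorff distance $\mathfrak{H}$. For compact $A,B$: $\Lambda_A(b)=\{a\in A:|b-a|=\min_{a'\in A}|b-a'|\}$, $\Lambda(A,B)=\{(a,b)\in A\times B:a\in\Lambda_A(b)\text{ or }b\in\Lambda_B(a)\}$; metric chains $\mathrm{Ch}(A_0,\dots,A_n)=\{(a_0,\dots,a_n):(a_j,a_{j+1})\in\Lambda(A_j,A_{j+1})\ \forall j\}$; and $A_0\oplus A_1x\oplus\cdots\oplus A_nx^n=\{\sum_{j=0}^n x^ja_j:(a_0,\dots,a_n)\in\mathrm{Ch}(A_0,\dots,A_n)\}$ (metric linear combination with coefficients $x^j$). $\mathcal{G}_*(p)=\{(x,p(x)):x\in I\}$ with metric $d((x,Y),(y,Z))=|x-y|+\mathfrak{H}(Y,Z)$; $\dim_H$ is Hausdorff dimension. *)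

theory Defs
  imports "HOL-Analysis.Analysis"
begin

definition nearest_pts :: "real set \<Rightarrow> real \<Rightarrow> real set" where
  "nearest_pts A b = {a \<in> A. \<forall>a'\<in>A. \<bar>b - a\<bar> \<le> \<bar>b - a'\<bar>}"

definition metric_pairs :: "real set \<Rightarrow> real set \<Rightarrow> (real \<times> real) set" where
  "metric_pairs A B = {(a, b). a \<in> A \<and> b \<in> B \<and> (a \<in> nearest_pts A b \<or> b \<in> nearest_pts B a)}"

text \<open>Metric chains Ch(A_0,...,A_n), chains represented as functions on {0..n}
  (values outside {0..n} are irrelevant).\<close>
definition metric_chain :: "(nat \<Rightarrow> real set) \<Rightarrow> nat \<Rightarrow> (nat \<Rightarrow> real) \<Rightarrow> bool" where
  "metric_chain A n c \<longleftrightarrow> (\<forall>j\<le>n. c j \<in> A j) \<and>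
     (\<forall>j<n. (c j, c (Suc j)) \<in> metric_pairs (A j) (A (Suc j)))"

definition metric_poly :: "(nat \<Rightarrow> real set) \<Rightarrow> nat \<Rightarrow> real \<Rightarrow> real set" where
  "metric_poly A n x = {(\<Sum>j\<le>n. x ^ j * c j) | c. metric_chain A n c}"

definition diam_wrt :: "('a \<Rightarrow> 'a \<Rightarrow> real) \<Rightarrow> 'a set \<Rightarrow> real" where
  "diam_wrt d U = Sup {d x y | x y. x \<in> U \<and> y \<in> U}"

text \<open>Contribution (diam U)^s of a covering set; the empty set contributes 0,
  and for s = 0 a nonempty set contributes 1 (convention 0^0 = 1).\<close>
definition cover_cost :: "('a \<Rightarrow> 'a \<Rightarrow> real) \<Rightarrow> real \<Rightarrow> 'a set \<Rightarrow> ennreal" where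
  "cover_cost d s U = (if U = {} then 0 else if s = 0 then 1 else ennreal (diam_wrt d U powr s))"

definition hausdorff_pre_measure ::
  "('a \<Rightarrow> 'a \<Rightarrow> real) \<Rightarrow> real \<Rightarrow> real \<Rightarrow> 'a set \<Rightarrow> ennreal" where
  "hausdorff_pre_measure d s \<delta> S =
     Inf {(\<Sum>i. cover_cost d s (U i)) | U :: nat \<Rightarrow> 'a set.
            S \<subseteq> (\<Union>i. U i) \<and> (\<forall>i. \<forall>x\<in>U i. \<forall>y\<in>U i. d x y \<le> \<delta>)}"

definition hausdorff_measure :: "('a \<Rightarrow> 'a \<Rightarrow> real) \<Rightarrow> real \<Rightarrow> 'a set \<Rightarrow> ennreal" where
  "hausdorff_measure d s S = (SUP \<delta>\<in>{0<..}. hausdorff_pre_measure d s \<delta> S)"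

definition hausdorff_dim :: "('a \<Rightarrow> 'a \<Rightarrow> real) \<Rightarrow> 'a set \<Rightarrow> ereal" where
  "hausdorff_dim d S = Inf {ereal s | s. 0 \<le> s \<and> hausdorff_measure d s S = 0}"

definition hausdorff_dist :: "real set \<Rightarrow> real set \<Rightarrow> real" where
  "hausdorff_dist A B = max (SUP a\<in>A. infdist a B) (SUP b\<in>B. infdist b A)"

definition graph_dist :: "real \<times> real set \<Rightarrow> real \<times> real set \<Rightarrow> real" where
  "graph_dist P Q = \<bar>fst P - fst Q\<bar> + hausdorff_dist (snd P) (snd Q)"

definition set_graph :: "real set \<Rightarrow> (real \<Rightarrow> real set) \<Rightarrow> (real \<times> real set) set" where
  "set_graph I p = {(x, p x) | x. x \<in> I}"

end

theory Submission
  imports Defs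
begin

lemma pow_lip:
  fixes x y M :: real
  assumes "\<bar>x\<bar> \<le> M" "\<bar>y\<bar> \<le> M" "1 \<le> M"
  shows "\<bar>x ^ j - y ^ j\<bar> \<le> real j * M ^ j * \<bar>x - y\<bar>"
proof (induction j)
  case 0 then show ?case by simp
next
  case (Suc j)
  have eq: "x ^ Suc j - y ^ Suc j = x * (x ^ j - y ^ j) + y ^ j * (x - y)"
    by (simp add: algebra_simps)
  have "\<bar>x * (x ^ j - y ^ j)\<bar> \<le> M * (real j * M ^ j * \<bar>x - y\<bar>)"
    unfolding abs_mult using Suc assms by (intro mult_mono) auto
  moreover have "\<bar>y ^ j * (x - y)\<bar> \<le> M ^ Suc j * \<bar>x - y\<bar>"
  proof -
    have "\<bar>y\<bar> ^ j \<le> M ^ j" using assms by (intro power_mono) auto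
    also have "M ^ j \<le> M ^ Suc j" using assms by (intro power_increasing) auto
    finally show ?thesis unfolding abs_mult power_abs by (intro mult_right_mono) auto
  qed
  ultimately have "\<bar>x ^ Suc j - y ^ Suc j\<bar> \<le> M * (real j * M ^ j * \<bar>x - y\<bar>) + M ^ Suc j * \<bar>x - y\<bar>"
    unfolding eq by (meson abs_triangle_ineq order_trans add_mono)
  also have "\<dots> = real (Suc j) * M ^ Suc j * \<bar>x - y\<bar>" by (simp add: algebra_simps)
  finally show ?case .
qed

lemma chain_bound:
  assumes "metric_chain (\<lambda>j. {l j..u j}) n c" "j \<le> n"
  shows "\<bar>c j\<bar> \<le> \<bar>l j\<bar> + \<bar>u j\<bar>"
  using assms unfolding metric_chain_def by force

lemma poly_lip:
  fixes x y M :: real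
  assumes "metric_chain (\<lambda>j. {l j..u j}) n c"
    "\<bar>x\<bar> \<le> M" "\<bar>y\<bar> \<le> M" "1 \<le> M"
  shows "\<bar>(\<Sum>j\<le>n. x ^ j * c j) - (\<Sum>j\<le>n. y ^ j * c j)\<bar>
     \<le> (\<Sum>j\<le>n. (\<bar>l j\<bar> + \<bar>u j\<bar>) * real j * M ^ j) * \<bar>x - y\<bar>"
proof -
  have "\<bar>(\<Sum>j\<le>n. x ^ j * c j) - (\<Sum>j\<le>n. y ^ j * c j)\<bar> = \<bar>\<Sum>j\<le>n. (x ^ j - y ^ j) * c j\<bar>"
    by (simp add: sum_subtractf algebra_simps)
  also have "\<dots> \<le> (\<Sum>j\<le>n. \<bar>(x ^ j - y ^ j) * c j\<bar>)" by (rule sum_abs)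
  also have "\<dots> \<le> (\<Sum>j\<le>n. (\<bar>l j\<bar> + \<bar>u j\<bar>) * real j * M ^ j * \<bar>x - y\<bar>)"
  proof (rule sum_mono)
    fix j assume "j \<in> {..n}"
    then have "\<bar>c j\<bar> \<le> \<bar>l j\<bar> + \<bar>u j\<bar>" using chain_bound assms(1) by auto
    moreover have "\<bar>x ^ j - y ^ j\<bar> \<le> real j * M ^ j * \<bar>x - y\<bar>" using pow_lip assms by auto
    ultimately have "\<bar>x ^ j - y ^ j\<bar> * \<bar>c j\<bar> \<le> (real j * M ^ j * \<bar>x - y\<bar>) * (\<bar>l j\<bar> + \<bar>u j\<bar>)"
      by (intro mult_mono) auto
    moreover have "(real j * M ^ j * \<bar>x - y\<bar>) * (\<bar>l j\<bar> + \<bar>u j\<bar>) = (\<bar>l j\<bar> + \<bar>u j\<bar>) * real j * M ^ j * \<bar>x - y\<bar>"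
      by simp
    ultimately show "\<bar>(x ^ j - y ^ j) * c j\<bar> \<le> (\<bar>l j\<bar> + \<bar>u j\<bar>) * real j * M ^ j * \<bar>x - y\<bar>"
      by (simp only: abs_mult)
  qed
  also have "\<dots> = (\<Sum>j\<le>n. (\<bar>l j\<bar> + \<bar>u j\<bar>) * real j * M ^ j) * \<bar>x - y\<bar>"
    by (simp add: sum_distrib_right)
  finally show ?thesis .
qed

primrec clampchain :: "(nat \<Rightarrow> real) \<Rightarrow> (nat \<Rightarrow> real) \<Rightarrow> nat \<Rightarrow> real" where
  "clampchain l u 0 = l 0"
| "clampchain l u (Suc j) = max (l (Suc j)) (min (u (Suc j)) (clampchain l u j))"

lemma chain_exists:
  assumes "\<And>j. j \<le> n \<Longrightarrow> l j \<le> u j"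
  shows "metric_chain (\<lambda>j. {l j..u j}) n (clampchain l u)"
proof -
  have mem: "clampchain l u j \<in> {l j..u j}" if "j \<le> n" for j
    using that assms by (cases j) auto
  have "(clampchain l u j, clampchain l u (Suc j)) \<in> metric_pairs {l j..u j} {l (Suc j)..u (Suc j)}"
    if "j < n" for j
  proof -
    have "clampchain l u (Suc j) \<in> nearest_pts {l (Suc j)..u (Suc j)} (clampchain l u j)"
      using assms[of "Suc j"] that unfolding nearest_pts_def by auto
    then show ?thesis using mem[of j] mem[of "Suc j"] that unfolding metric_pairs_def by auto
  qed
  then show ?thesis using mem unfolding metric_chain_def by auto
qed

lemma poly_nonempty:
  assumes "\<And>j. j \<le> n \<Longrightarrow> l j \<le> u j"
  shows "metric_poly (\<lambda>j. {l j..u j}) n x \<noteq> {}"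
  using chain_exists[of n l u, OF assms] unfolding metric_poly_def by auto

lemma hd_side:
  fixes x y M :: real
  assumes "\<And>j. j \<le> n \<Longrightarrow> l j \<le> u j" "\<bar>x\<bar> \<le> M" "\<bar>y\<bar> \<le> M" "1 \<le> M"
  defines "P \<equiv> metric_poly (\<lambda>j. {l j..u j}) n"
  defines "L \<equiv> (\<Sum>j\<le>n. (\<bar>l j\<bar> + \<bar>u j\<bar>) * real j * M ^ j)"
  shows "0 \<le> (SUP z\<in>P x. infdist z (P y)) \<and> (SUP z\<in>P x. infdist z (P y)) \<le> L * \<bar>x - y\<bar>"
proof -
  have ne: "P x \<noteq> {}" unfolding P_def using poly_nonempty[OF assms(1)] .
  have b: "infdist z (P y) \<le> L * \<bar>x - y\<bar>" if "z \<in> P x" for z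
  proof -
    have "\<exists>c. z = (\<Sum>j\<le>n. x ^ j * c j) \<and> metric_chain (\<lambda>j. {l j..u j}) n c"
      using that unfolding P_def metric_poly_def by (simp only: mem_Collect_eq)
    then obtain c where c: "metric_chain (\<lambda>j. {l j..u j}) n c" "z = (\<Sum>j\<le>n. x ^ j * c j)"
      by auto
    have "(\<Sum>j\<le>n. y ^ j * c j) \<in> P y" unfolding P_def metric_poly_def using c(1) by auto
    then have "infdist z (P y) \<le> dist z (\<Sum>j\<le>n. y ^ j * c j)" by (rule infdist_le)
    also have "\<dots> \<le> L * \<bar>x - y\<bar>" unfolding dist_real_def c(2) L_def
      using poly_lip[OF c(1) assms(2,3,4)] .
    finally show ?thesis .
  qed
  have up: "(SUP z\<in>P x. infdist z (P y)) \<le> L * \<bar>x - y\<bar>"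
    using ne b by (intro cSUP_least) auto
  obtain z0 where z0: "z0 \<in> P x" using ne by blast
  have "bdd_above ((\<lambda>z. infdist z (P y)) ` P x)" using b by (intro bdd_aboveI2) auto
  then have "infdist z0 (P y) \<le> (SUP z\<in>P x. infdist z (P y))" using z0 by (intro cSUP_upper)
  then have "0 \<le> (SUP z\<in>P x. infdist z (P y))" using infdist_nonneg[of z0 "P y"] by linarith
  then show ?thesis using up by simp
qed

lemma hd_bound:
  fixes x y M :: real
  assumes "\<And>j. j \<le> n \<Longrightarrow> l j \<le> u j" "\<bar>x\<bar> \<le> M" "\<bar>y\<bar> \<le> M" "1 \<le> M"
  shows "0 \<le> hausdorff_dist (metric_poly (\<lambda>j. {l j..u j}) n x) (metric_poly (\<lambda>j. {l j..u j}) n y)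
    \<and> hausdorff_dist (metric_poly (\<lambda>j. {l j..u j}) n x) (metric_poly (\<lambda>j. {l j..u j}) n y)
       \<le> (\<Sum>j\<le>n. (\<bar>l j\<bar> + \<bar>u j\<bar>) * real j * M ^ j) * \<bar>x - y\<bar>"
proof -
  note h1 = hd_side[OF assms]
  note h2 = hd_side[OF assms(1,3,2,4)]
  have mb: "\<And>a b k::real. 0 \<le> a \<Longrightarrow> a \<le> k \<Longrightarrow> 0 \<le> b \<Longrightarrow> b \<le> k \<Longrightarrow> 0 \<le> max a b \<and> max a b \<le> k"
    by simp
  show ?thesis unfolding hausdorff_dist_def
    apply (rule mb)
    using h1 h2 by (simp_all only: abs_minus_commute[of y x])
qed

lemma pre_le:
  assumes "S \<subseteq> (\<Union>i. U i)" "\<forall>i. \<forall>x\<in>U i. \<forall>y\<in>U i. d x y \<le> \<delta>"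
  shows "hausdorff_pre_measure d s \<delta> S \<le> (\<Sum>i. cover_cost d s (U i))"
  unfolding hausdorff_pre_measure_def
  by (rule Inf_lower) (use assms in auto)

lemma grid:
  fixes a b x :: real and N :: nat
  assumes "a < b" "0 < N" "x \<in> {a..b}"
  shows "\<exists>k<N. a + real k * ((b - a) / N) \<le> x \<and> x \<le> a + real (Suc k) * ((b - a) / N)"
proof -
  define h where "h = (b - a) / N"
  have h: "0 < h" using assms unfolding h_def by auto
  define t where "t = (x - a) / h"
  have xt: "x = a + t * h" unfolding t_def using h by simp
  have t0: "0 \<le> t" unfolding t_def using h assms by auto
  have tN: "t \<le> N" unfolding t_def using h assms by (simp add: h_def field_simps)
  show ?thesis
  proof (cases "t < N")
    case True
    define k where "k = nat (floor t)"
    have k1: "real k \<le> t" unfolding k_def using t0 by linarith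
    have k2: "t < real (Suc k)" unfolding k_def using t0 by linarith
    have "k < N" using k1 True k2 unfolding k_def using t0 by linarith
    moreover have "a + real k * h \<le> x" using k1 h unfolding xt by (simp add: mult_right_mono)
    moreover have "x \<le> a + real (Suc k) * h" using k2 h unfolding xt
      by (intro add_left_mono mult_right_mono) auto
    ultimately show ?thesis unfolding h_def by blast
  next
    case False
    then have "t = N" using tN by simp
    then have "x = b" using xt assms unfolding h_def by simp
    moreover have "real (Suc (N - 1)) = real N" using assms by simp
    ultimately show ?thesis using assms
      by (intro exI[of _ "N - 1"]) (auto simp: field_simps)
  qed
qed

lemma choose_N:
  fixes C s e \<delta> :: real
  assumes "0 < C" "1 < s" "0 < e" "0 < \<delta>"
  shows "\<exists>N::nat. 0 < N \<and> C / N \<le> \<delta> \<and> real N * (C / N) powr s \<le> e"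
proof -
  obtain N :: nat where N: "max 1 (max (C / \<delta>) ((C powr s / e) powr (1 / (s - 1)))) < real N"
    using reals_Archimedean2 by blast
  have N1: "1 < real N" using N by linarith
  have "C / \<delta> < N" using N by linarith
  then have "C / N \<le> \<delta>" using assms N1 by (simp add: field_simps)
  have "(C powr s / e) powr (1 / (s - 1)) < N" using N by linarith
  then have "((C powr s / e) powr (1 / (s - 1))) powr (s - 1) < real N powr (s - 1)"
    using assms by (intro powr_less_mono2) auto
  then have lt: "C powr s / e < real N powr (s - 1)"
    using assms by (simp add: powr_powr)
  have "real N * (C / N) powr s = real N * (C powr s / real N powr s)"
    using assms N1 by (simp add: powr_divide)
  also have "real N powr s = real N * real N powr (s - 1)"
  proof -
    have "real N powr s = real N powr (1 + (s - 1))" by simp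
    also have "\<dots> = real N powr 1 * real N powr (s - 1)" by (rule powr_add)
    finally show ?thesis using N1 by simp
  qed
  also have "real N * (C powr s / (real N * real N powr (s - 1))) = C powr s / real N powr (s - 1)"
    using N1 by simp
  also have "\<dots> \<le> e" using lt assms N1 by (simp add: field_simps)
  finally show ?thesis using N1 \<open>C / N \<le> \<delta>\<close> by (intro exI[of _ N]) auto
qed

lemma diam_bounds:
  assumes "U \<noteq> {}" "\<And>p q. p \<in> U \<Longrightarrow> q \<in> U \<Longrightarrow> d p q \<le> r"
    "\<And>p. p \<in> U \<Longrightarrow> 0 \<le> d p p"
  shows "0 \<le> diam_wrt d U \<and> diam_wrt d U \<le> r"
proof -
  let ?D = "{d x y | x y. x \<in> U \<and> y \<in> U}"
  obtain p where p: "p \<in> U" using assms by blast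
  have ne: "?D \<noteq> {}" using p by blast
  have bd: "bdd_above ?D" using assms(2) by (intro bdd_aboveI[of _ r]) auto
  have "diam_wrt d U \<le> r" unfolding diam_wrt_def using ne assms(2) by (intro cSup_least) auto
  moreover have "d p p \<le> diam_wrt d U" unfolding diam_wrt_def using bd p by (intro cSup_upper) auto
  ultimately show ?thesis using assms(3)[OF p] by linarith
qed

lemma diam_upper:
  assumes "\<And>p q. p \<in> U \<Longrightarrow> q \<in> U \<Longrightarrow> d p q \<le> r" "p \<in> U" "q \<in> U"
  shows "d p q \<le> diam_wrt d U"
proof -
  have bd: "bdd_above {d x y | x y. x \<in> U \<and> y \<in> U}" using assms(1) by (intro bdd_aboveI[of _ r]) auto
  show ?thesis unfolding diam_wrt_def using bd assms by (intro cSup_upper) auto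
qed

lemma dim_upper:
  fixes d :: "'b \<Rightarrow> 'b \<Rightarrow> real" and g :: "real \<Rightarrow> 'b" and K s :: real
  assumes ab: "a < b" and K: "0 < K"
    and H: "\<And>x y. x \<in> {a..b} \<Longrightarrow> y \<in> {a..b} \<Longrightarrow> 0 \<le> d (g x) (g y) \<and> d (g x) (g y) \<le> K * \<bar>x - y\<bar>"
    and s: "1 < s"
  shows "hausdorff_measure d s (g ` {a..b}) = 0"
proof -
  have pre0: "hausdorff_pre_measure d s \<delta> (g ` {a..b}) = 0" if \<delta>: "0 < \<delta>" for \<delta>
  proof -
    have bound: "hausdorff_pre_measure d s \<delta> (g ` {a..b}) \<le> ennreal e" if e: "0 < e" for e
    proof -
      define C where "C = K * (b - a)"
      have C: "0 < C" unfolding C_def using K ab by simp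
      obtain N :: nat where N: "0 < N" "C / N \<le> \<delta>" "real N * (C / N) powr s \<le> e"
        using choose_N[OF C s e \<delta>] by blast
      define h where "h = (b - a) / N"
      have h: "0 < h" using ab N unfolding h_def by auto
      have Kh: "K * h = C / N" unfolding h_def C_def by simp
      define U where "U k = (if k < N then g ` {a + real k * h .. a + real (Suc k) * h} else {})" for k
      have inab: "x \<in> {a..b}" if "k < N" "x \<in> {a + real k * h .. a + real (Suc k) * h}" for k x
      proof -
        have "real (Suc k) * h \<le> real N * h" using that h by (intro mult_right_mono) auto
        also have "real N * h = b - a" unfolding h_def using N by simp
        moreover have "0 \<le> real k * h" using h by simp
        ultimately show ?thesis using that by auto
      qed
      have dU: "d p q \<le> C / N" if pq: "p \<in> U k" "q \<in> U k" for k p q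
      proof -
        have k: "k < N" using pq unfolding U_def by (auto split: if_splits)
        have pI: "p \<in> g ` {a + real k * h .. a + real (Suc k) * h}"
          and qI: "q \<in> g ` {a + real k * h .. a + real (Suc k) * h}"
          using pq k unfolding U_def by simp_all
        from pI obtain x where x: "x \<in> {a + real k * h .. a + real (Suc k) * h}" "p = g x" by blast
        from qI obtain y where y: "y \<in> {a + real k * h .. a + real (Suc k) * h}" "q = g y" by blast
        have xy: "x \<in> {a + real k * h .. a + real (Suc k) * h}"
          "y \<in> {a + real k * h .. a + real (Suc k) * h}" "p = g x" "q = g y" using x y by auto
        have sk: "a + real (Suc k) * h = a + real k * h + h" by (simp add: algebra_simps)
        have "\<bar>x - y\<bar> \<le> h" using xy(1,2) unfolding sk by (simp add: abs_le_iff)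
        then have "K * \<bar>x - y\<bar> \<le> K * h" using K by simp
        then show ?thesis using H[OF inab[OF k xy(1)] inab[OF k xy(2)]] xy Kh by simp
      qed
      have cover: "g ` {a..b} \<subseteq> (\<Union>k. U k)"
      proof
        fix p assume "p \<in> g ` {a..b}"
        then obtain x where x: "x \<in> {a..b}" "p = g x" by blast
        obtain k where k: "k < N" "a + real k * h \<le> x" "x \<le> a + real (Suc k) * h"
          using grid[OF ab N(1) x(1)] unfolding h_def by blast
        then have "p \<in> U k" unfolding U_def using x by auto
        then show "p \<in> (\<Union>k. U k)" by blast
      qed
      have cost: "cover_cost d s (U k) \<le> ennreal ((C / N) powr s)" if "k < N" for k
      proof -
        have ne: "U k \<noteq> {}" unfolding U_def using that h by auto
        have "0 \<le> d p p" if "p \<in> U k" for p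
        proof -
          obtain x where "x \<in> {a + real k * h .. a + real (Suc k) * h}" "p = g x"
            using \<open>p \<in> U k\<close> \<open>k < N\<close> unfolding U_def by auto
          then show ?thesis using H[OF inab[OF \<open>k < N\<close>] inab[OF \<open>k < N\<close>]] by blast
        qed
        then have db: "0 \<le> diam_wrt d (U k) \<and> diam_wrt d (U k) \<le> C / N"
          using diam_bounds[of "U k" d "C / N", OF ne] dU by blast
        have "diam_wrt d (U k) powr s \<le> (C / N) powr s"
          using db s by (intro powr_mono2) auto
        then show ?thesis unfolding cover_cost_def using ne s by (auto intro: ennreal_leI)
      qed
      have "hausdorff_pre_measure d s \<delta> (g ` {a..b}) \<le> (\<Sum>k. cover_cost d s (U k))"
      proof (rule pre_le[OF cover])
        show "\<forall>k. \<forall>x\<in>U k. \<forall>y\<in>U k. d x y \<le> \<delta>"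
        proof (intro allI ballI)
          fix k x y assume "x \<in> U k" "y \<in> U k"
          then show "d x y \<le> \<delta>" using dU[of x k y] N(2) by linarith
        qed
      qed
      also have "(\<Sum>k. cover_cost d s (U k)) = (\<Sum>k<N. cover_cost d s (U k))"
        by (rule suminf_finite) (auto simp: U_def cover_cost_def)
      also have "\<dots> \<le> (\<Sum>k<N. ennreal ((C / N) powr s))"
        using cost by (intro sum_mono) auto
      also have "\<dots> = ennreal (\<Sum>k<N. (C / N) powr s)"
        by (rule sum_ennreal) auto
      also have "(\<Sum>k<N. (C / N) powr s) = real N * (C / N) powr s" by simp
      also have "ennreal (real N * (C / N) powr s) \<le> ennreal e" using N(3) by (rule ennreal_leI)
      finally show ?thesis .
    qed
    have "hausdorff_pre_measure d s \<delta> (g ` {a..b}) \<le> 0"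
    proof (rule ennreal_le_epsilon)
      fix e :: real assume "0 < e"
      then show "hausdorff_pre_measure d s \<delta> (g ` {a..b}) \<le> 0 + ennreal e"
        using bound[of e] by (simp only: add.left_neutral)
    qed
    then show ?thesis by simp
  qed
  show ?thesis unfolding hausdorff_measure_def using pre0 by simp
qed

lemma dim_lower:
  fixes d :: "'b \<Rightarrow> 'b \<Rightarrow> real" and g :: "real \<Rightarrow> 'b" and s :: real
  assumes ab: "a < b"
    and H: "\<And>x y. x \<in> {a..b} \<Longrightarrow> y \<in> {a..b} \<Longrightarrow> \<bar>x - y\<bar> \<le> d (g x) (g y)"
    and s: "0 \<le> s" "s < 1"
  shows "hausdorff_measure d s (g ` {a..b}) \<noteq> 0"
proof -
  have pre: "ennreal (b - a) \<le> hausdorff_pre_measure d s 1 (g ` {a..b})"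
    unfolding hausdorff_pre_measure_def
  proof (rule Inf_greatest)
    fix z assume "z \<in> {(\<Sum>i. cover_cost d s (U i)) | U :: nat \<Rightarrow> 'b set.
            g ` {a..b} \<subseteq> (\<Union>i. U i) \<and> (\<forall>i. \<forall>x\<in>U i. \<forall>y\<in>U i. d x y \<le> 1)}"
    then obtain U :: "nat \<Rightarrow> 'b set" where z: "z = (\<Sum>i. cover_cost d s (U i))"
      and cov: "g ` {a..b} \<subseteq> (\<Union>i. U i)" and dU: "\<forall>i. \<forall>x\<in>U i. \<forall>y\<in>U i. d x y \<le> 1"
      by blast
    define W where "W i = {x \<in> {a..b}. g x \<in> U i}" for i
    define D where "D i = diam_wrt d (U i)" for i
    define J where "J i = (if W i = {} then {} else {Inf (W i) .. Inf (W i) + D i})" for i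
    have WJ: "W i \<subseteq> J i" and mJ: "emeasure lborel (J i) \<le> cover_cost d s (U i)" for i
    proof -
      have "W i \<subseteq> J i \<and> emeasure lborel (J i) \<le> cover_cost d s (U i)"
      proof (cases "W i = {}")
        case True
        then show ?thesis unfolding J_def by simp
      next
        case False
        then obtain w0 where w0: "w0 \<in> W i" by blast
        have Une: "U i \<noteq> {}" using w0 unfolding W_def by auto
        have dd: "\<And>p q. p \<in> U i \<Longrightarrow> q \<in> U i \<Longrightarrow> d p q \<le> 1" using dU by blast
        have xyD: "\<bar>x - y\<bar> \<le> D i" if "x \<in> W i" "y \<in> W i" for x y
        proof -
          have "\<bar>x - y\<bar> \<le> d (g x) (g y)" using H that unfolding W_def by blast
          also have "\<dots> \<le> D i" unfolding D_def
            using diam_upper[of "U i" d 1 "g x" "g y"] dd that unfolding W_def by blast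
          finally show ?thesis .
        qed
        have D0: "0 \<le> D i" using xyD[OF w0 w0] by simp
        have D1: "D i \<le> 1"
        proof -
          obtain p where p: "p \<in> U i" using Une by blast
          have ne: "{d x y | x y. x \<in> U i \<and> y \<in> U i} \<noteq> {}" using p by blast
          have "diam_wrt d (U i) \<le> 1" unfolding diam_wrt_def
            using ne dd by (intro cSup_least) auto
          then show ?thesis unfolding D_def .
        qed
        have bb: "bdd_below (W i)" unfolding W_def by (intro bdd_belowI[of _ a]) auto
        have sub: "W i \<subseteq> {Inf (W i) .. Inf (W i) + D i}"
        proof
          fix w assume w: "w \<in> W i"
          have "Inf (W i) \<le> w" using bb w by (intro cInf_lower)
          moreover have "w - D i \<le> Inf (W i)"
          proof (rule cInf_greatest[OF False])
            fix y assume "y \<in> W i"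
            then have "\<bar>w - y\<bar> \<le> D i" by (rule xyD[OF w])
            then show "w - D i \<le> y" by (simp add: abs_le_iff)
          qed
          ultimately show "w \<in> {Inf (W i) .. Inf (W i) + D i}" by simp
        qed
        have "emeasure lborel (J i) = ennreal (D i)"
          unfolding J_def using False D0 by simp
        also have "ennreal (D i) \<le> cover_cost d s (U i)"
        proof (cases "s = 0")
          case True
          then show ?thesis unfolding cover_cost_def using Une D1 by simp
        next
          case False
          have "D i \<le> D i powr s"
          proof (cases "D i = 0")
            case True then show ?thesis by simp
          next
            case False
            have "D i powr 1 \<le> D i powr s" using D0 D1 s by (intro powr_mono') auto
            then show ?thesis using D0 by simp
          qed
          then show ?thesis unfolding cover_cost_def D_def using Une False by (simp add: ennreal_leI)
        qed
        finally show ?thesis using sub False unfolding J_def by simp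
      qed
      then show "W i \<subseteq> J i" "emeasure lborel (J i) \<le> cover_cost d s (U i)" by auto
    qed
    have ab_sub: "{a..b} \<subseteq> (\<Union>i. J i)"
    proof
      fix x assume x: "x \<in> {a..b}"
      then obtain i where "g x \<in> U i" using cov by blast
      then have "x \<in> W i" unfolding W_def using x by simp
      then show "x \<in> (\<Union>i. J i)" using WJ by blast
    qed
    have meas: "range J \<subseteq> sets lborel" unfolding J_def by auto
    have "ennreal (b - a) = emeasure lborel {a..b}" using ab by simp
    also have "\<dots> \<le> emeasure lborel (\<Union>i. J i)"
      using meas ab_sub by (intro emeasure_mono) auto
    also have "\<dots> \<le> (\<Sum>i. emeasure lborel (J i))"
      using meas by (rule emeasure_subadditive_countably)
    also have "\<dots> \<le> (\<Sum>i. cover_cost d s (U i))"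
      using mJ by (intro suminf_le) auto
    finally show "ennreal (b - a) \<le> z" unfolding z .
  qed
  have "hausdorff_pre_measure d s 1 (g ` {a..b}) \<le> hausdorff_measure d s (g ` {a..b})"
    unfolding hausdorff_measure_def by (rule SUP_upper) simp
  moreover have "0 < ennreal (b - a)" using ab by simp
  ultimately show ?thesis using pre by auto
qed

theorem theorem4p12:
  fixes a b :: real and n :: nat and l u :: "nat \<Rightarrow> real"
  assumes "a < b"
    and "\<And>j. j \<le> n \<Longrightarrow> l j \<le> u j"
  shows "hausdorff_dim graph_dist
           (set_graph {a..b} (metric_poly (\<lambda>j. {l j..u j}) n)) = 1"
proof -
  define P where "P = metric_poly (\<lambda>j. {l j..u j}) n"
  define g where "g x = (x, P x)" for x
  define M where "M = max 1 (max \<bar>a\<bar> \<bar>b\<bar>)"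
  define L where "L = (\<Sum>j\<le>n. (\<bar>l j\<bar> + \<bar>u j\<bar>) * real j * M ^ j)"
  have G: "set_graph {a..b} P = g ` {a..b}" unfolding set_graph_def g_def by auto
  have M1: "1 \<le> M" unfolding M_def by simp
  have L0: "0 \<le> L" unfolding L_def using M1 by (intro sum_nonneg) auto
  have key: "\<bar>x - y\<bar> \<le> graph_dist (g x) (g y) \<and> graph_dist (g x) (g y) \<le> (1 + L) * \<bar>x - y\<bar>"
    if "x \<in> {a..b}" "y \<in> {a..b}" for x y
  proof -
    have "\<bar>x\<bar> \<le> M" "\<bar>y\<bar> \<le> M" using that unfolding M_def by auto
    from hd_bound[of n l u x M y, OF assms(2) this M1]
    have "0 \<le> hausdorff_dist (P x) (P y) \<and> hausdorff_dist (P x) (P y) \<le> L * \<bar>x - y\<bar>"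
      unfolding P_def L_def by blast
    then show ?thesis unfolding graph_dist_def g_def by (simp add: algebra_simps)
  qed
  have up: "hausdorff_measure graph_dist s (g ` {a..b}) = 0" if "1 < s" for s
  proof (rule dim_upper[OF assms(1) _ _ that])
    show "0 < 1 + L" using L0 by simp
    fix x y assume "x \<in> {a..b}" "y \<in> {a..b}"
    from key[OF this] show "0 \<le> graph_dist (g x) (g y) \<and> graph_dist (g x) (g y) \<le> (1 + L) * \<bar>x - y\<bar>"
      by linarith
  qed
  have lo: "hausdorff_measure graph_dist s (g ` {a..b}) \<noteq> 0" if "0 \<le> s" "s < 1" for s
    using dim_lower[OF assms(1) _ that] key by blast
  define S where "S = {ereal s | s. 0 \<le> s \<and> hausdorff_measure graph_dist s (g ` {a..b}) = 0}"
  have "Inf S = 1"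
  proof (rule antisym)
    show "Inf S \<le> 1"
    proof (rule dense_ge)
      fix t :: ereal assume t: "1 < t"
      show "Inf S \<le> t"
      proof (cases t)
        case (real r)
        then have "1 < r" using t by simp
        then have "t \<in> S" unfolding S_def using up real by auto
        then show ?thesis by (rule Inf_lower)
      next
        case PInf then show ?thesis by simp
      next
        case MInf then show ?thesis using t by simp
      qed
    qed
  next
    show "1 \<le> Inf S"
    proof (rule Inf_greatest)
      fix t assume "t \<in> S"
      then obtain r where r: "t = ereal r" "0 \<le> r" "hausdorff_measure graph_dist r (g ` {a..b}) = 0"
        unfolding S_def by blast
      have "\<not> r < 1" using lo r by blast
      then show "1 \<le> t" using r by simp
    qed
  qed
  then show ?thesis unfolding hausdorff_dim_def S_def G[unfolded P_def, symmetric] P_def .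
qed

end
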